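(* Let $\Bbbk$ be a field, $m\in\mathbb N$, $K=\Bbbk[\sigma]/(\sigma^m)\subset L=\Bbbk[\varepsilon]/(\varepsilon^{2m})$ via $\sigma=\varepsilon^2$, $K_j=K/(\sigma^j)$ and $L_j=L/(\varepsilon^{2j})$. Let $0\le j\le m$, $V=K\oplus K_j$, and let $\tilde\theta:V\to L$ be an injective $K$-linear map such that its adjoint $\theta:L\otimes_K V\cong L\oplus L_j\to L$ is surjective; write $\theta=(a\mid b)$ with $a,b\in L$, $\varepsilon^{2j}b=0$ (for $j=0$ the second entry is absent). Then there exists an element $\gamma=\alpha_0+\alpha_1\varepsilon^2+\dots+\alpha_{m-j-1}\varepsilon^{2(m-j-1)}\in L$ ($\alpha_i\in\Bbbk$) such that $\theta$ is equivalent to $\vartheta_\gamma:=(1+\varepsilon\gamma\mid\varepsilon^{2(m-j)+1})$. Moreover, $\vartheta_\gamma$ and $\vartheta_{\gamma'}$ are equivalent if and only if $\gamma=\gamma'$.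
   Context: Two $L$-linear maps $\theta,\theta':L\otimes_K V\to L$ are called equivalent if there is $\varphi\in\operatorname{Aut}_K(V)$ with $\theta'=\theta\circ(1\otimes\varphi)$. *)

theory Defs
  imports "HOL-Computational_Algebra.Polynomial"
begin

text \<open>Elements of L = k[eps]/(eps^(2m)) are represented by their
  unique reduced representatives: polynomials in eps with all coefficients of degree
  >= 2m equal to zero.  K = k[sigma]/(sigma^m) is the subring of even
  representatives (sigma = eps^2); K_j = K/(sigma^j) and L_j = L/(eps^(2j)) are
  represented by representatives of degree < 2j.\<close>

definition trunc :: "nat \<Rightarrow> 'k::field poly \<Rightarrow> 'k poly" where
  "trunc n p = (\<Sum>i<n. monom (coeff p i) i)"

definition eps :: "'k::field poly" where
  "eps = monom 1 1"

definition Lset :: "nat \<Rightarrow> 'k::field poly set" where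
  "Lset n = {p. \<forall>i\<ge>n. coeff p i = 0}"

definition Kset :: "nat \<Rightarrow> 'k::field poly set" where
  "Kset n = {p \<in> Lset n. \<forall>i. odd i \<longrightarrow> coeff p i = 0}"

definition Vset :: "nat \<Rightarrow> nat \<Rightarrow> ('k::field poly \<times> 'k poly) set" where
  "Vset m j = Kset (2*m) \<times> Kset (2*j)"

definition Vsmult :: "nat \<Rightarrow> nat \<Rightarrow> 'k::field poly \<Rightarrow> 'k poly \<times> 'k poly \<Rightarrow> 'k poly \<times> 'k poly" where
  "Vsmult m j s v = (trunc (2*m) (s * fst v), trunc (2*j) (s * snd v))"

definition AutV :: "nat \<Rightarrow> nat \<Rightarrow> ('k::field poly \<times> 'k poly \<Rightarrow> 'k poly \<times> 'k poly) set" where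
  "AutV m j = {\<phi>. bij_betw \<phi> (Vset m j) (Vset m j)
     \<and> (\<forall>u\<in>Vset m j. \<forall>v\<in>Vset m j. \<phi> (fst u + fst v, snd u + snd v) = (fst (\<phi> u) + fst (\<phi> v), snd (\<phi> u) + snd (\<phi> v)))
     \<and> (\<forall>s\<in>Kset (2*m). \<forall>v\<in>Vset m j. \<phi> (Vsmult m j s v) = Vsmult m j s (\<phi> v))}"

text \<open>The K-linear map tilde-theta = (a | b) : V \<rightarrow> L\<close>
definition thetaK :: "nat \<Rightarrow> 'k::field poly \<times> 'k poly \<Rightarrow> 'k poly \<times> 'k poly \<Rightarrow> 'k poly" where
  "thetaK m ab v = trunc (2*m) (fst ab * fst v + snd ab * snd v)"

text \<open>Its adjoint theta = (a | b) : L \<otimes>_K V \<cong> L \<oplus> L_j \<rightarrow> L\<close>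
definition thetaL :: "nat \<Rightarrow> 'k::field poly \<times> 'k poly \<Rightarrow> 'k poly \<times> 'k poly \<Rightarrow> 'k poly" where
  "thetaL m ab z = trunc (2*m) (fst ab * fst z + snd ab * snd z)"

text \<open>1 \<otimes> phi on L \<otimes>_K V \<cong> L \<oplus> L_j, determined by phi(1,0) = (p,r) and phi(0,1) = (q,s)\<close>
definition tensor_id :: "nat \<Rightarrow> nat \<Rightarrow> ('k::field poly \<times> 'k poly \<Rightarrow> 'k poly \<times> 'k poly)
    \<Rightarrow> 'k poly \<times> 'k poly \<Rightarrow> 'k poly \<times> 'k poly" where
  "tensor_id m j \<phi> z =
    (let e1 = \<phi> (trunc (2*m) 1, 0); e2 = \<phi> (0, trunc (2*j) 1) in
      (trunc (2*m) (fst z * fst e1 + snd z * fst e2),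
       trunc (2*j) (fst z * snd e1 + snd z * snd e2)))"

definition equivalent :: "nat \<Rightarrow> nat \<Rightarrow> 'k::field poly \<times> 'k poly \<Rightarrow> 'k poly \<times> 'k poly \<Rightarrow> bool" where
  "equivalent m j \<theta> \<theta>' \<longleftrightarrow>
     (\<exists>\<phi>\<in>AutV m j. \<forall>z\<in>Lset (2*m) \<times> Lset (2*j).
        thetaL m \<theta>' z = thetaL m \<theta> (tensor_id m j \<phi> z))"

definition Gam :: "nat \<Rightarrow> nat \<Rightarrow> 'k::field poly set" where
  "Gam m j = Kset (2*(m-j))"

definition vartheta :: "nat \<Rightarrow> nat \<Rightarrow> 'k::field poly \<Rightarrow> 'k poly \<times> 'k poly" where
  "vartheta m j \<gamma> = (trunc (2*m) (1 + eps * \<gamma>), trunc (2*m) (eps ^ (2*(m-j)+1)))"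

end

theory Submission
  imports Defs "HOL-Number_Theory.Cong"
begin

lemma coeff_trunc: "coeff (trunc n p) i = (if i < n then coeff p i else 0)"
  unfolding trunc_def by (simp add: coeff_sum coeff_monom)

lemma trunc_in_L: "trunc n p \<in> Lset n"
  by (simp add: Lset_def coeff_trunc)

lemma trunc_id: "p \<in> Lset n \<Longrightarrow> trunc n p = p"
  by (simp add: Lset_def coeff_trunc poly_eq_iff)

lemma cong_X_iff: "[p = q] (mod monom 1 n) \<longleftrightarrow> (\<forall>i<n. coeff p i = coeff (q::'k::field poly) i)"
  by (simp add: cong_iff_dvd_diff monom_1_dvd_iff')

lemma trunc_cong: "[trunc n p = p] (mod monom 1 n)"
  by (simp add: cong_X_iff coeff_trunc)

lemma trunc_eq_iff: "trunc n p = trunc n q \<longleftrightarrow> [p = q] (mod monom 1 n)"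
  by (auto simp add: cong_X_iff coeff_trunc poly_eq_iff)

lemma Lset_eq: "p \<in> Lset n \<Longrightarrow> q \<in> Lset n \<Longrightarrow> [p = q] (mod monom 1 n) \<Longrightarrow> p = q"
  by (metis trunc_eq_iff trunc_id)

lemma trunc_0[simp]: "trunc 0 p = 0"
  by (simp add: trunc_def)

lemma trunc_zero[simp]: "trunc n 0 = 0"
  by (simp add: trunc_def)

lemma trunc_add: "trunc n (p + q) = trunc n p + trunc n q"
  by (simp add: poly_eq_iff coeff_trunc)

definition evp :: "'k::field poly \<Rightarrow> bool" where
  "evp p \<longleftrightarrow> (\<forall>i. odd i \<longrightarrow> coeff p i = 0)"

lemma Kset_iff: "p \<in> Kset n \<longleftrightarrow> p \<in> Lset n \<and> evp p"
  by (simp add: Kset_def evp_def)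

lemma evp_mult: "evp p \<Longrightarrow> evp q \<Longrightarrow> evp (p * q)"
  unfolding evp_def coeff_mult
proof (intro allI impI sum.neutral ballI)
  fix k i :: nat assume p: "\<forall>i. odd i \<longrightarrow> coeff p i = 0" and q: "\<forall>i. odd i \<longrightarrow> coeff q i = 0"
    and k: "odd k" and i: "i \<in> {..k}"
  show "coeff p i * coeff q (k - i) = 0"
  proof (cases "odd i")
    case True thus ?thesis using p by simp
  next
    case False
    then have "odd (k - i)" using k i by auto
    thus ?thesis using q by simp
  qed
qed

lemma evp_add: "evp p \<Longrightarrow> evp q \<Longrightarrow> evp (p + q)" by (simp add: evp_def)
lemma evp_diff: "evp p \<Longrightarrow> evp q \<Longrightarrow> evp (p - q)" by (simp add: evp_def)
lemma evp_minus: "evp p \<Longrightarrow> evp (- p)" by (simp add: evp_def)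
lemma evp_0[simp]: "evp 0" by (simp add: evp_def)
lemma evp_1[simp]: "evp 1" by (auto simp add: evp_def intro: odd_pos)
lemma evp_monom: "even k \<Longrightarrow> evp (monom c k)" by (auto simp add: evp_def coeff_monom)
lemma evp_const: "evp [:c:]" by (metis evp_monom monom_0 even_zero)
lemma evp_trunc: "evp p \<Longrightarrow> evp (trunc n p)" by (simp add: evp_def coeff_trunc)

definition Ev :: "'k::field poly \<Rightarrow> 'k poly" where
  "Ev p = Abs_poly (\<lambda>i. if even i then coeff p i else 0)"

lemma coeff_Ev: "coeff (Ev p) i = (if even i then coeff p i else 0)"
proof -
  from MOST_coeff_eq_0[of p] obtain m where "\<forall>k>m. coeff p k = 0"
    by (auto simp: MOST_nat)
  then have "\<forall>k>m. (if even k then coeff p k else 0) = 0"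
    by auto
  then have "\<forall>\<^sub>\<infinity>k. (if even k then coeff p k else 0) = 0"
    unfolding MOST_nat by (intro exI[of _ m]) auto
  then show ?thesis
    by (simp add: Ev_def poly.Abs_poly_inverse)
qed

definition Od :: "'k::field poly \<Rightarrow> 'k poly" where
  "Od p = Ev (poly_shift 1 p)"

lemma evp_Ev: "evp (Ev p)" by (simp add: evp_def coeff_Ev)
lemma evp_Od: "evp (Od p)" by (simp add: Od_def evp_Ev)

lemma Ev_Od: "p = Ev p + monom 1 1 * Od p"
  by (auto simp add: poly_eq_iff coeff_Ev Od_def coeff_monom_mult coeff_poly_shift)

lemma coeff_Od: "coeff (Od p) i = (if even i then coeff p (i+1) else 0)"
  by (simp add: Od_def coeff_Ev coeff_poly_shift)

lemma shift_mult: "monom 1 k dvd u \<Longrightarrow> monom 1 k * poly_shift k u = u"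
  by (auto simp add: monom_1_dvd_iff' poly_eq_iff coeff_monom_mult coeff_poly_shift)

lemma evp_shift: "evp u \<Longrightarrow> even k \<Longrightarrow> evp (poly_shift k u)"
  by (simp add: evp_def coeff_poly_shift)

lemma monom_dvd: "a \<le> b \<Longrightarrow> monom 1 a dvd (monom 1 b :: 'k::field poly)"
proof -
  assume "a \<le> b"
  then have "monom 1 b = (monom 1 a :: 'k poly) * monom 1 (b - a)" by (simp add: mult_monom)
  then show ?thesis by (rule dvdI)
qed

lemma inverse_exists:
  fixes f :: "'k::field poly"
  assumes "evp f" "coeff f 0 \<noteq> 0"
  shows "\<exists>g. evp g \<and> monom 1 n dvd f * g - 1"
proof (induction n)
  case 0 then show ?case by (intro exI[of _ 0]) simp
next
  case (Suc n)
  show ?case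
  proof (cases n)
    case 0
    have "evp [:inverse (coeff f 0):] \<and> monom 1 1 dvd f * [:inverse (coeff f 0):] - 1"
      using assms by (simp add: monom_1_dvd_iff' coeff_mult_0 evp_const)
    then show ?thesis using 0 by (metis One_nat_def)
  next
    case (Suc n')
    from Suc.IH obtain g where g: "evp g" "monom 1 n dvd f * g - 1" by blast
    then obtain h where h: "f * g - 1 = monom 1 n * h" by (auto elim: dvdE)
    have "f * (g * (2 - f * g)) - 1 = - ((f * g - 1) * (f*g - 1))" by algebra
    also have "\<dots> = monom 1 (n + n) * (- h * h)"
    proof -
      have "monom 1 (n+n) = monom 1 n * (monom 1 n :: 'k poly)" by (simp add: mult_monom)
      then show ?thesis by (simp only: h) (simp add: algebra_simps)
    qed
    finally have eq: "f * (g * (2 - f * g)) - 1 = monom 1 (n + n) * (- h * h)" .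
    have "monom 1 (Suc n) dvd f * (g * (2 - f * g)) - 1"
    proof -
      have "monom 1 (Suc n) dvd (monom 1 (n + n) :: 'k poly)" using Suc by (intro monom_dvd) simp
      then show ?thesis using eq
        by (metis dvd_mult2)
    qed
    moreover have "evp (g * (2 - f * g))"
    proof -
      have "evp (2::'k poly)" using evp_add[OF evp_1 evp_1] by (simp add: one_add_one)
      then show ?thesis using g assms by (intro evp_mult evp_diff) auto
    qed
    ultimately show ?thesis by blast
  qed
qed

lemma absorb:
  fixes q :: "'k::field poly"
  assumes "monom 1 (2*m) dvd monom 1 (2*j) * q"
  shows "[trunc (2*j) u * q = u * q] (mod monom 1 (2*m))"
proof -
  have "monom 1 (2*j) dvd trunc (2*j) u - u" using trunc_cong[of "2*j" u] by (simp add: cong_iff_dvd_diff)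
  then obtain h where h: "trunc (2*j) u - u = monom 1 (2*j) * h" by (auto elim: dvdE)
  have "trunc (2*j) u * q - u * q = (monom 1 (2*j) * q) * h" using h by (simp add: algebra_simps)
  then show ?thesis using assms by (simp add: cong_iff_dvd_diff)
qed

lemma cong_weaken:
  fixes u v :: "'k::field poly"
  assumes "a \<le> b" "[u = v] (mod monom 1 b)"
  shows "[u = v] (mod monom 1 a)"
  using assms by (metis cong_dvd_modulus monom_dvd)

definition phiM :: "nat \<Rightarrow> nat \<Rightarrow> 'k::field poly \<Rightarrow> 'k poly \<Rightarrow> 'k poly \<Rightarrow> 'k poly \<Rightarrow> 'k poly \<times> 'k poly \<Rightarrow> 'k poly \<times> 'k poly" where
  "phiM m j p q r s v = (trunc (2*m) (fst v * p + snd v * q), trunc (2*j) (fst v * r + snd v * s))"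

lemma Vset_iff: "v \<in> Vset m j \<longleftrightarrow> fst v \<in> Lset (2*m) \<and> evp (fst v) \<and> snd v \<in> Lset (2*j) \<and> evp (snd v)"
  by (cases v) (auto simp: Vset_def Kset_iff)

lemma phiM_Vset:
  assumes "evp p" "evp q" "evp r" "evp s" "v \<in> Vset m j"
  shows "phiM m j p q r s v \<in> Vset m j"
  using assms by (simp add: Vset_iff phiM_def trunc_in_L evp_trunc evp_add evp_mult)

lemma phiM_inv:
  fixes p q r s p' q' r' s' :: "'k::field poly"
  assumes jm: "j \<le> m"
  and qd: "monom 1 (2*m) dvd monom 1 (2*j) * q'"
  and c1: "[p*p' + r*q' = 1] (mod monom 1 (2*m))"
  and c2: "[q*p' + s*q' = 0] (mod monom 1 (2*m))"
  and c3: "[p*r' + r*s' = 0] (mod monom 1 (2*j))"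
  and c4: "[q*r' + s*s' = 1] (mod monom 1 (2*j))"
  and v: "v \<in> Vset m j"
  shows "phiM m j p' q' r' s' (phiM m j p q r s v) = v"
proof -
  obtain x y where xy: "v = (x, y)" by force
  have x: "x \<in> Lset (2*m)" and y: "y \<in> Lset (2*j)" using v xy by (auto simp: Vset_iff)
  let ?M = "monom 1 (2*m) :: 'k poly" and ?J = "monom 1 (2*j) :: 'k poly"
  have "[trunc (2*m) (x*p + y*q) * p' + trunc (2*j) (x*r + y*s) * q' = (x*p + y*q) * p' + (x*r + y*s) * q'] (mod ?M)"
    by (intro cong_add cong_scalar_right trunc_cong absorb qd)
  also have "(x*p + y*q) * p' + (x*r + y*s) * q' = x * (p*p' + r*q') + y * (q*p' + s*q')"
    by (simp add: algebra_simps)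
  also have "[\<dots> = x * 1 + y * 0] (mod ?M)"
    by (intro cong_add cong_scalar_left c1 c2)
  finally have 1: "trunc (2*m) (trunc (2*m) (x*p + y*q) * p' + trunc (2*j) (x*r + y*s) * q') = x"
    using x by (simp add: trunc_eq_iff[symmetric] trunc_id)
  have "[trunc (2*m) (x*p + y*q) * r' = (x*p + y*q) * r'] (mod ?J)"
    using jm by (intro cong_weaken[of "2*j" "2*m"] cong_scalar_right trunc_cong) auto
  then have "[trunc (2*m) (x*p + y*q) * r' + trunc (2*j) (x*r + y*s) * s' = (x*p + y*q) * r' + (x*r + y*s) * s'] (mod ?J)"
    by (rule cong_add[OF _ cong_scalar_right[OF trunc_cong]])
  also have "(x*p + y*q) * r' + (x*r + y*s) * s' = x * (p*r' + r*s') + y * (q*r' + s*s')"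
    by (simp add: algebra_simps)
  also have "[\<dots> = x * 0 + y * 1] (mod ?J)"
    by (intro cong_add cong_scalar_left c3 c4)
  finally have 2: "trunc (2*j) (trunc (2*m) (x*p + y*q) * r' + trunc (2*j) (x*r + y*s) * s') = y"
    using y by (simp add: trunc_eq_iff[symmetric] trunc_id)
  show ?thesis using 1 2 xy by (simp add: phiM_def)
qed

lemma phiM_AutV:
  fixes p q r s p' q' r' s' :: "'k::field poly"
  assumes jm: "j \<le> m"
  and ev: "evp p" "evp q" "evp r" "evp s" "evp p'" "evp q'" "evp r'" "evp s'"
  and qd: "monom 1 (2*m) dvd monom 1 (2*j) * q" "monom 1 (2*m) dvd monom 1 (2*j) * q'"
  and c1: "[p*p' + r*q' = 1] (mod monom 1 (2*m))"
  and c2: "[q*p' + s*q' = 0] (mod monom 1 (2*m))"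
  and c3: "[p*r' + r*s' = 0] (mod monom 1 (2*j))"
  and c4: "[q*r' + s*s' = 1] (mod monom 1 (2*j))"
  and d1: "[p'*p + r'*q = 1] (mod monom 1 (2*m))"
  and d2: "[q'*p + s'*q = 0] (mod monom 1 (2*m))"
  and d3: "[p'*r + r'*s = 0] (mod monom 1 (2*j))"
  and d4: "[q'*r + s'*s = 1] (mod monom 1 (2*j))"
  shows "phiM m j p q r s \<in> AutV m j"
proof -
  let ?f = "phiM m j p q r s" and ?g = "phiM m j p' q' r' s'"
  let ?M = "monom 1 (2*m) :: 'k poly" and ?J = "monom 1 (2*j) :: 'k poly"
  have bij: "bij_betw ?f (Vset m j) (Vset m j)"
  proof (rule bij_betw_byWitness[where f'="?g"])
    show "\<forall>a\<in>Vset m j. ?g (?f a) = a"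
      using phiM_inv[OF jm qd(2) c1 c2 c3 c4] by blast
    show "\<forall>a\<in>Vset m j. ?f (?g a) = a"
      using phiM_inv[OF jm qd(1) d1 d2 d3 d4] by blast
    show "?f ` Vset m j \<subseteq> Vset m j" using phiM_Vset[OF ev(1-4)] by blast
    show "?g ` Vset m j \<subseteq> Vset m j" using phiM_Vset[OF ev(5-8)] by blast
  qed
  have add: "\<forall>u\<in>Vset m j. \<forall>v\<in>Vset m j. ?f (fst u + fst v, snd u + snd v) = (fst (?f u) + fst (?f v), snd (?f u) + snd (?f v))"
  proof (intro ballI)
    fix u v :: "'k poly \<times> 'k poly"
    have e1: "(fst u + fst v) * p + (snd u + snd v) * q = (fst u * p + snd u * q) + (fst v * p + snd v * q)"
      by (simp add: algebra_simps)
    have e2: "(fst u + fst v) * r + (snd u + snd v) * s = (fst u * r + snd u * s) + (fst v * r + snd v * s)"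
      by (simp add: algebra_simps)
    show "?f (fst u + fst v, snd u + snd v) = (fst (?f u) + fst (?f v), snd (?f u) + snd (?f v))"
      unfolding phiM_def fst_conv snd_conv e1 e2 trunc_add ..
  qed
  have sm: "?f (Vsmult m j t v) = Vsmult m j t (?f v)" for t v
  proof -
    obtain x y where xy: "v = (x, y)" by force
    have "[trunc (2*m) (t*x) * p + trunc (2*j) (t*y) * q = t*x*p + t*y*q] (mod ?M)"
      by (intro cong_add cong_scalar_right trunc_cong absorb qd)
    moreover have "[t * trunc (2*m) (x*p + y*q) = t*x*p + t*y*q] (mod ?M)"
      using cong_scalar_left[OF trunc_cong, of t "2*m" "x*p + y*q"] by (simp add: algebra_simps)
    ultimately have 1: "trunc (2*m) (trunc (2*m) (t*x) * p + trunc (2*j) (t*y) * q) = trunc (2*m) (t * trunc (2*m) (x*p + y*q))"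
      unfolding trunc_eq_iff using cong_trans cong_sym by blast
    have "[trunc (2*m) (t*x) * r = t*x*r] (mod ?J)"
      using jm by (intro cong_weaken[of "2*j" "2*m"] cong_scalar_right trunc_cong) auto
    then have "[trunc (2*m) (t*x) * r + trunc (2*j) (t*y) * s = t*x*r + t*y*s] (mod ?J)"
      by (rule cong_add[OF _ cong_scalar_right[OF trunc_cong]])
    moreover have "[t * trunc (2*j) (x*r + y*s) = t*x*r + t*y*s] (mod ?J)"
      using cong_scalar_left[OF trunc_cong, of t "2*j" "x*r + y*s"] by (simp add: algebra_simps)
    ultimately have 2: "trunc (2*j) (trunc (2*m) (t*x) * r + trunc (2*j) (t*y) * s) = trunc (2*j) (t * trunc (2*j) (x*r + y*s))"
      unfolding trunc_eq_iff using cong_trans cong_sym by blast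
    show ?thesis using 1 2 xy by (simp add: phiM_def Vsmult_def)
  qed
  show ?thesis using bij add sm by (simp add: AutV_def)
qed

lemma absorb_gen:
  fixes X u v :: "'k::field poly"
  assumes "M dvd J * X" "[u = v] (mod J)"
  shows "[u * X = v * X] (mod M)"
proof -
  obtain h where h: "u - v = J * h" using assms(2) by (auto simp: cong_iff_dvd_diff elim: dvdE)
  have "u * X - v * X = (u - v) * X" by (simp add: left_diff_distrib)
  also have "\<dots> = (J * X) * h" by (simp add: h ac_simps)
  finally have "u * X - v * X = (J * X) * h" .
  then show ?thesis using assms(1) by (simp add: cong_iff_dvd_diff)
qed

lemma thetaL_phiM:
  fixes a b p q r s :: "'k::field poly"
  assumes jm: "j \<le> m"
  and qd: "monom 1 (2*m) dvd monom 1 (2*j) * q"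
  and bd: "monom 1 (2*m) dvd monom 1 (2*j) * b"
  and z: "snd z \<in> Lset (2*j)"
  shows "thetaL m (a, b) (tensor_id m j (phiM m j p q r s) z)
       = trunc (2*m) (fst z * (a*p + b*r) + snd z * (a*q + b*s))"
proof -
  let ?M = "monom 1 (2*m) :: 'k poly" and ?J = "monom 1 (2*j) :: 'k poly"
  obtain z1 z2 where zz: "z = (z1, z2)" by force
  define o1 where "o1 = trunc (2*m) (1::'k poly)"
  define o2 where "o2 = trunc (2*j) (1::'k poly)"
  define T1 where "T1 = trunc (2*m) (z1 * trunc (2*m) (o1 * p) + z2 * trunc (2*m) (o2 * q))"
  define T2 where "T2 = trunc (2*j) (z1 * trunc (2*j) (o1 * r) + z2 * trunc (2*j) (o2 * s))"
  have lhs: "thetaL m (a, b) (tensor_id m j (phiM m j p q r s) z) = trunc (2*m) (a * T1 + b * T2)"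
    by (simp add: thetaL_def tensor_id_def phiM_def zz T1_def T2_def o1_def o2_def Let_def)
  have o1c: "[o1 = 1] (mod ?M)" unfolding o1_def by (rule trunc_cong)
  have o2c: "[o2 = 1] (mod ?J)" unfolding o2_def by (rule trunc_cong)
  have "[T1 = z1 * trunc (2*m) (o1 * p) + z2 * trunc (2*m) (o2 * q)] (mod ?M)"
    unfolding T1_def by (rule trunc_cong)
  also have "[z1 * trunc (2*m) (o1 * p) + z2 * trunc (2*m) (o2 * q) = z1 * (1 * p) + z2 * (o2 * q)] (mod ?M)"
  proof (intro cong_add cong_scalar_left)
    show "[trunc (2*m) (o1 * p) = 1 * p] (mod ?M)"
      by (rule cong_trans[OF trunc_cong cong_scalar_right[OF o1c]])
    show "[trunc (2*m) (o2 * q) = o2 * q] (mod ?M)" by (rule trunc_cong)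
  qed
  finally have T1c: "[a * T1 = a * (z1 * p + z2 * (o2 * q))] (mod ?M)"
    by (intro cong_scalar_left) simp
  have "[o1 * r = 1 * r] (mod ?J)"
    using jm by (intro cong_weaken[of "2*j" "2*m"] cong_scalar_right o1c) auto
  then have "[trunc (2*j) (o1 * r) = r] (mod ?J)"
    using cong_trans[OF trunc_cong] by simp
  then have "[z1 * trunc (2*j) (o1 * r) + z2 * trunc (2*j) (o2 * s) = z1 * r + z2 * (o2 * s)] (mod ?J)"
    by (intro cong_add cong_scalar_left trunc_cong)
  then have "[T2 = z1 * r + z2 * (o2 * s)] (mod ?J)"
    unfolding T2_def by (rule cong_trans[OF trunc_cong])
  then have T2c: "[T2 * b = (z1 * r + z2 * (o2 * s)) * b] (mod ?M)"
    by (rule absorb_gen[OF bd])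
  have "[a * T1 + b * T2 = a * (z1 * p + z2 * (o2 * q)) + (z1 * r + z2 * (o2 * s)) * b] (mod ?M)"
    using cong_add[OF T1c T2c] by (simp add: mult.commute)
  also have "a * (z1 * p + z2 * (o2 * q)) + (z1 * r + z2 * (o2 * s)) * b
      = z1 * (a*p + b*r) + (z2 * o2) * (a*q + b*s)"
    by (simp add: algebra_simps)
  also have "[\<dots> = z1 * (a*p + b*r) + z2 * (a*q + b*s)] (mod ?M)"
  proof (intro cong_add cong_refl absorb_gen)
    show "?M dvd ?J * (a*q + b*s)"
    proof -
      have "?J * (a*q + b*s) = a * (?J * q) + s * (?J * b)" by (simp add: algebra_simps)
      then show ?thesis using qd bd by (simp add: dvd_add dvd_mult)
    qed
    show "[z2 * o2 = z2] (mod ?J)" using cong_scalar_left[OF o2c, of z2] by simp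
  qed
  finally have "trunc (2*m) (a * T1 + b * T2) = trunc (2*m) (z1 * (a*p + b*r) + z2 * (a*q + b*s))"
    by (simp only: trunc_eq_iff)
  then show ?thesis using lhs zz by simp
qed

lemma id_AutV: "(\<lambda>v. v) \<in> AutV m j"
  by (simp add: AutV_def bij_betw_id[unfolded id_def])

lemma tensor_id_id:
  assumes "fst z \<in> Lset (2*m)" "snd z \<in> Lset (2*j)"
  shows "tensor_id m j (\<lambda>v. v) z = z"
proof -
  obtain z1 z2 where zz: "z = (z1, z2)" by force
  have "[z1 * trunc (2*m) 1 = z1 * 1] (mod monom 1 (2*m))" by (intro cong_scalar_left trunc_cong)
  then have 1: "trunc (2*m) (z1 * trunc (2*m) 1) = z1" using assms zz
    by (metis trunc_eq_iff trunc_id fst_conv mult_1_right)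
  have "[z2 * trunc (2*j) 1 = z2 * 1] (mod monom 1 (2*j))" by (intro cong_scalar_left trunc_cong)
  then have 2: "trunc (2*j) (z2 * trunc (2*j) 1) = z2" using assms zz
    by (metis trunc_eq_iff trunc_id snd_conv mult_1_right)
  show ?thesis using 1 2 zz by (simp add: tensor_id_def Let_def)
qed

lemma equiv_refl: "equivalent m j \<theta> \<theta>"
  unfolding equivalent_def by (rule bexI[OF _ id_AutV]) (auto simp: tensor_id_id)

lemma Lset0: "p \<in> Lset 0 \<Longrightarrow> p = 0"
  by (simp add: Lset_def poly_eq_iff)

lemma eps_pow: "eps ^ k = monom 1 k"
  by (simp add: eps_def monom_power)

lemma uniq:
  fixes \<gamma> \<gamma>' :: "'k::field poly"
  assumes jm: "j \<le> m" and g: "\<gamma> \<in> Gam m j" and g': "\<gamma>' \<in> Gam m j"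
    and eq: "equivalent m j (vartheta m j \<gamma>) (vartheta m j \<gamma>')"
  shows "\<gamma> = \<gamma>'"
proof (cases "m - j = 0")
  case True
  then show ?thesis using g g' by (simp add: Gam_def Kset_iff) (metis Lset0)
next
  case False
  define n where "n = m - j"
  have n: "n \<ge> 1" "2*n \<le> 2*m" "m \<ge> 1" using False jm by (auto simp: n_def)
  have gK: "\<gamma> \<in> Lset (2*n)" "evp \<gamma>" "\<gamma>' \<in> Lset (2*n)" "evp \<gamma>'"
    using g g' by (auto simp: Gam_def Kset_iff n_def)
  from eq obtain \<phi> where phi: "\<phi> \<in> AutV m j"
    and eqz: "\<forall>z\<in>Lset (2*m) \<times> Lset (2*j). thetaL m (vartheta m j \<gamma>') z = thetaL m (vartheta m j \<gamma>) (tensor_id m j \<phi> z)"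
    by (auto simp: equivalent_def)
  have one: "trunc (2*m) (1::'k poly) = 1" using n by (intro trunc_id) (simp add: Lset_def coeff_1)
  have 1: "(1::'k poly, 0::'k poly) \<in> Vset m j"
    using n by (simp add: Vset_iff Lset_def coeff_1)
  obtain P R where PR: "\<phi> (1, 0) = (P, R)" by force
  have PRV: "(P, R) \<in> Vset m j" using phi 1 PR unfolding AutV_def
    by (metis (mono_tags, lifting) bij_betw_apply mem_Collect_eq)
  then have PL: "P \<in> Lset (2*m)" "evp P" "R \<in> Lset (2*j)" "evp R" by (auto simp: Vset_iff)
  have tz: "tensor_id m j \<phi> (1, 0) = (P, R)"
    using PR one PL by (simp add: tensor_id_def Let_def trunc_id)
  have z1: "(1::'k poly, 0::'k poly) \<in> Lset (2*m) \<times> Lset (2*j)"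
    using n by (simp add: Lset_def coeff_1)
  have "thetaL m (vartheta m j \<gamma>') (1, 0) = thetaL m (vartheta m j \<gamma>) (P, R)"
    using eqz z1 tz by metis
  then have "trunc (2*m) (trunc (2*m) (1 + eps * \<gamma>')) = trunc (2*m) (trunc (2*m) (1 + eps * \<gamma>) * P + trunc (2*m) (eps ^ (2*n+1)) * R)"
    by (simp add: thetaL_def vartheta_def n_def)
  then have "[trunc (2*m) (1 + eps * \<gamma>') = trunc (2*m) (1 + eps * \<gamma>) * P + trunc (2*m) (eps ^ (2*n+1)) * R] (mod monom 1 (2*m))"
    by (simp only: trunc_eq_iff)
  moreover have "[trunc (2*m) (1 + eps * \<gamma>') = 1 + eps * \<gamma>'] (mod monom 1 (2*m))" by (rule trunc_cong)
  moreover have "[trunc (2*m) (1 + eps * \<gamma>) * P + trunc (2*m) (eps ^ (2*n+1)) * R = (1 + eps * \<gamma>) * P + eps ^ (2*n+1) * R] (mod monom 1 (2*m))"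
    by (intro cong_add cong_scalar_right trunc_cong)
  ultimately have "[1 + eps * \<gamma>' = (1 + eps * \<gamma>) * P + eps ^ (2*n+1) * R] (mod monom 1 (2*m))"
    by (meson cong_sym cong_trans)
  then have "[1 + monom 1 1 * \<gamma>' = (1 + monom 1 1 * \<gamma>) * P + monom 1 (2*n+1) * R] (mod monom 1 (2*m))"
    by (simp only: eps_pow) (simp only: eps_def)
  moreover have "(1 + monom 1 1 * \<gamma>) * P + monom 1 (2*n+1) * R = P + monom 1 1 * (\<gamma> * P) + monom 1 (2*n+1) * R"
    by (simp add: algebra_simps)
  ultimately have C: "\<And>i. i < 2*m \<Longrightarrow> coeff (1 + monom 1 1 * \<gamma>') i = coeff (P + monom 1 1 * (\<gamma> * P) + monom 1 (2*n+1) * R) i"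
    by (simp only: cong_X_iff)
  have evgP: "evp (\<gamma> * P)" using gK PL by (simp add: evp_mult)
  have P1: "P = 1"
  proof (rule poly_eqI)
    fix i
    show "coeff P i = coeff 1 i"
    proof (cases "odd i")
      case True then show ?thesis using PL by (auto simp: evp_def coeff_1 intro: odd_pos)
    next
      case ev: False
      show ?thesis
      proof (cases "i < 2*m")
        case True
        have a: "coeff (monom 1 1 * \<gamma>') i = 0" using ev gK
          by (auto simp: coeff_monom_mult evp_def)
        have b: "coeff (monom 1 1 * (\<gamma> * P)) i = 0" using ev evgP
          by (auto simp: coeff_monom_mult evp_def)
        have c: "coeff (monom 1 (2*n+1) * R) i = 0" using ev PL
          by (auto simp: coeff_monom_mult evp_def)
        show ?thesis using C[OF True] a b c by simp
      next
        case False then show ?thesis using PL n by (auto simp: Lset_def coeff_1)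
      qed
    qed
  qed
  show ?thesis
  proof (rule poly_eqI)
    fix i
    show "coeff \<gamma> i = coeff \<gamma>' i"
    proof (cases "odd i \<or> i \<ge> 2*n")
      case True then show ?thesis using gK by (auto simp: evp_def Lset_def)
    next
      case False
      then have i: "i + 1 < 2*m" "even i" "i + 1 < 2*n+1" using n by auto
      have c: "coeff (monom 1 (2*n+1) * R) (i+1) = 0" using i by (simp add: coeff_monom_mult)
      show ?thesis using C[OF i(1)] c i P1 by (simp add: coeff_monom_mult coeff_1)
    qed
  qed
qed

lemma kernel2:
  fixes x y z w :: "'k::field"
  assumes "x * w - y * z = 0"
  shows "\<exists>c1 c2. (c1 \<noteq> 0 \<or> c2 \<noteq> 0) \<and> x * c1 + z * c2 = 0 \<and> y * c1 + w * c2 = 0"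
proof (cases "z \<noteq> 0 \<or> x \<noteq> 0")
  case True
  then show ?thesis using assms
    by (intro exI[of _ z] exI[of _ "- x"]) (auto simp: algebra_simps)
next
  case False
  show ?thesis
  proof (cases "w \<noteq> 0 \<or> y \<noteq> 0")
    case True
    then show ?thesis using False
      by (intro exI[of _ w] exI[of _ "- y"]) (auto simp: algebra_simps)
  next
    case False2: False
    then show ?thesis using False by (intro exI[of _ 1] exI[of _ 0]) auto
  qed
qed

lemma inj_det:
  fixes a b \<alpha> \<beta> \<mu> \<nu> :: "'k::field poly"
  assumes j1: "j \<ge> 1" and jm: "j \<le> m"
    and inj: "inj_on (thetaK m (a, b)) (Vset m j)"
    and ha: "a = \<alpha> + monom 1 1 * \<beta>" and hb: "b = monom 1 (2*(m-j)) * (\<mu> + monom 1 1 * \<nu>)"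
    and ev: "evp \<alpha>" "evp \<mu>"
  shows "coeff \<alpha> 0 * coeff \<nu> 0 - coeff \<beta> 0 * coeff \<mu> 0 \<noteq> 0"
proof
  assume "coeff \<alpha> 0 * coeff \<nu> 0 - coeff \<beta> 0 * coeff \<mu> 0 = 0"
  from kernel2[OF this] obtain c1 c2 where c: "c1 \<noteq> 0 \<or> c2 \<noteq> 0"
    "coeff \<alpha> 0 * c1 + coeff \<mu> 0 * c2 = 0" "coeff \<beta> 0 * c1 + coeff \<nu> 0 * c2 = 0" by blast
  define v where "v = (monom c1 (2*(m-1)), monom c2 (2*(j-1)))"
  have m1: "m \<ge> 1" using j1 jm by simp
  have vV: "v \<in> Vset m j" using m1 j1
    by (auto simp: v_def Vset_iff Lset_def coeff_monom evp_monom)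
  have 0: "(0, 0) \<in> Vset m j" by (simp add: Vset_iff Lset_def)
  have vne: "v \<noteq> (0, 0)" using c by (auto simp: v_def)
  define b' where "b' = \<mu> + monom 1 1 * \<nu>"
  have "b * monom c2 (2*(j-1)) = monom c2 (2*(m-j) + 2*(j-1)) * b'"
    by (simp add: hb b'_def mult_monom algebra_simps)
  also have "2*(m-j) + 2*(j-1) = 2*(m-1)" using j1 jm by simp
  finally have bb: "b * monom c2 (2*(j-1)) = monom c2 (2*(m-1)) * b'" .
  have th: "thetaK m (a, b) v = trunc (2*m) (monom c1 (2*(m-1)) * a + monom c2 (2*(m-1)) * b')"
    unfolding thetaK_def v_def fst_conv snd_conv bb by (simp add: ac_simps)
  have a0: "coeff a 0 = coeff \<alpha> 0" and a1: "coeff a 1 = coeff \<beta> 0"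
    using ev by (auto simp: ha coeff_monom_mult evp_def)
  have b0: "coeff b' 0 = coeff \<mu> 0" and b1: "coeff b' 1 = coeff \<nu> 0"
    using ev by (auto simp: b'_def coeff_monom_mult evp_def)
  have "thetaK m (a, b) v = 0"
    unfolding th
  proof (rule poly_eqI)
    fix i
    show "coeff (trunc (2*m) (monom c1 (2*(m-1)) * a + monom c2 (2*(m-1)) * b')) i = coeff 0 i"
    proof (cases "i < 2*(m-1) \<or> i \<ge> 2*m")
      case True then show ?thesis by (auto simp: coeff_trunc coeff_monom_mult)
    next
      case False
      then have "i = 2*(m-1) \<or> i = 2*(m-1) + 1" using m1 by auto
      then show ?thesis
      proof
        assume i: "i = 2*(m-1)"
        have "coeff (trunc (2*m) (monom c1 (2*(m-1)) * a + monom c2 (2*(m-1)) * b')) i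
            = c1 * coeff a 0 + c2 * coeff b' 0" using i m1 by (simp add: coeff_trunc coeff_monom_mult)
        then show ?thesis using c a0 b0 by (simp add: mult.commute)
      next
        assume i: "i = 2*(m-1) + 1"
        have "coeff (trunc (2*m) (monom c1 (2*(m-1)) * a + monom c2 (2*(m-1)) * b')) i
            = c1 * coeff a 1 + c2 * coeff b' 1" using i m1 by (simp add: coeff_trunc coeff_monom_mult)
        then show ?thesis using c a1 b1 by (simp add: mult.commute)
      qed
    qed
  qed
  moreover have "thetaK m (a, b) (0, 0) = 0" by (simp add: thetaK_def poly_eq_iff coeff_trunc)
  ultimately show False using inj vV 0 vne by (metis inj_on_def)
qed

lemma existence:
  fixes a b :: "'k::field poly"
  assumes jm: "j \<le> m" and m1: "m \<ge> 1"
    and aL: "a \<in> Lset (2*m)" and bL: "b \<in> Lset (2*m)"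
    and bd0: "trunc (2*m) (eps ^ (2*j) * b) = 0"
    and inj: "inj_on (thetaK m (a, b)) (Vset m j)"
    and surj: "thetaL m (a, b) ` (Lset (2*m) \<times> Lset (2*j)) = Lset (2*m)"
  shows "\<exists>\<gamma>\<in>Gam m j. equivalent m j (a, b) (vartheta m j \<gamma>)"
proof -
  define n where "n = m - j"
  let ?M = "monom 1 (2*m) :: 'k poly" and ?J = "monom 1 (2*j) :: 'k poly"
  define N where "N = (monom 1 (2*n) :: 'k poly)"
  have mjn: "2*j + 2*n = 2*m" using jm by (simp add: n_def)
  have MJN: "?M = ?J * N" unfolding N_def mult_monom mjn by simp
  have NM: "N dvd ?M" using MJN by simp
  have "[eps ^ (2*j) * b = 0] (mod ?M)"
    using bd0 by (simp add: trunc_eq_iff[symmetric])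
  then have bd: "?M dvd ?J * b" by (simp add: cong_0_iff eps_pow)
  then have Nb: "N dvd b" using MJN by simp
  define b' where "b' = poly_shift (2*n) b"
  have bb': "b = N * b'" using Nb by (simp add: b'_def N_def shift_mult)
  define \<alpha> where "\<alpha> = Ev a"
  define \<beta> where "\<beta> = Od a"
  define \<mu> where "\<mu> = Ev b'"
  define \<nu> where "\<nu> = Od b'"
  have ev1: "evp \<alpha>" "evp \<beta>" "evp \<mu>" "evp \<nu>" by (simp_all add: \<alpha>_def \<beta>_def \<mu>_def \<nu>_def evp_Ev evp_Od)
  have ha: "a = \<alpha> + monom 1 1 * \<beta>" using Ev_Od[of a] by (simp add: \<alpha>_def \<beta>_def)
  have hb': "b' = \<mu> + monom 1 1 * \<nu>" using Ev_Od[of b'] by (simp add: \<mu>_def \<nu>_def)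
  have a0: "coeff \<alpha> 0 = coeff a 0" by (simp add: \<alpha>_def coeff_Ev)
  \<comment> \<open>surjectivity gives a unit\<close>
  have alpha0: "coeff \<alpha> 0 \<noteq> 0" if "n \<ge> 1"
  proof -
    have "1 \<in> Lset (2*m)" using m1 by (simp add: Lset_def coeff_1)
    then have "1 \<in> thetaL m (a, b) ` (Lset (2*m) \<times> Lset (2*j))" using surj by simp
    then obtain z where z: "z \<in> Lset (2*m) \<times> Lset (2*j)" and "thetaL m (a, b) z = 1"
      by (auto elim!: imageE)
    then have "coeff (trunc (2*m) (a * fst z + b * snd z)) 0 = 1" by (simp add: thetaL_def)
    then have "coeff a 0 * coeff (fst z) 0 + coeff b 0 * coeff (snd z) 0 = 1"
      using m1 by (simp add: coeff_trunc coeff_mult_0)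
    moreover have "coeff b 0 = 0" using Nb that by (simp add: N_def monom_1_dvd_iff')
    ultimately show ?thesis using a0 by auto
  qed
  obtain \<alpha>i where \<alpha>i: "evp \<alpha>i" "coeff \<alpha> 0 \<noteq> 0 \<Longrightarrow> ?M dvd \<alpha> * \<alpha>i - 1"
  proof (cases "coeff \<alpha> 0 = 0")
    case True then show ?thesis using that[of 0] by simp
  next
    case False then show ?thesis using that inverse_exists[OF ev1(1) False, of "2*m"] by blast
  qed
  define \<gamma> where "\<gamma> = trunc (2*n) (\<beta> * \<alpha>i)"
  have gG: "\<gamma> \<in> Gam m j" unfolding \<gamma>_def Gam_def Kset_iff n_def
    using ev1 \<alpha>i by (simp add: trunc_in_L evp_trunc evp_mult)
  have evg: "evp \<gamma>" using gG by (simp add: Gam_def Kset_iff)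
  have Nd: "N dvd \<beta> - \<gamma> * \<alpha>"
  proof (cases "n = 0")
    case True then show ?thesis by (simp add: N_def)
  next
    case False
    then have n1: "n \<ge> 1" by simp
    have "[\<gamma> * \<alpha> = (\<beta> * \<alpha>i) * \<alpha>] (mod N)"
      unfolding \<gamma>_def N_def by (rule cong_scalar_right[OF trunc_cong])
    also have "(\<beta> * \<alpha>i) * \<alpha> = \<beta> * (\<alpha> * \<alpha>i)" by (simp only: ac_simps)
    also have "[\<beta> * (\<alpha> * \<alpha>i) = \<beta> * 1] (mod N)"
    proof (rule cong_scalar_left)
      have "?M dvd \<alpha> * \<alpha>i - 1" using \<alpha>i(2)[OF alpha0[OF n1]] .
      then have "N dvd \<alpha> * \<alpha>i - 1" using NM by (rule dvd_trans[rotated])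
      then show "[\<alpha> * \<alpha>i = 1] (mod N)" by (simp add: cong_iff_dvd_diff)
    qed
    finally show ?thesis by (simp add: cong_iff_dvd_diff dvd_diff_commute)
  qed
  define r where "r = poly_shift (2*n) (\<beta> - \<gamma> * \<alpha>)"
  have Nr: "N * r = \<beta> - \<gamma> * \<alpha>" using Nd by (simp add: r_def N_def shift_mult)
  have evr: "evp r" unfolding r_def using ev1 evg by (intro evp_shift evp_diff evp_mult) auto
  define p where "p = \<alpha>"
  define q where "q = N * \<mu>"
  define s where "s = (if j = 0 then 1 else \<nu> - \<gamma> * \<mu>)"
  have evN: "evp N" by (simp add: N_def evp_monom)
  have evpqs: "evp p" "evp q" "evp s" using ev1 evg evN
    by (simp_all add: p_def q_def s_def evp_mult evp_diff)
  define D where "D = p * s - r * q"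
  have evD: "evp D" using evpqs evr by (simp add: D_def evp_mult evp_diff)
  have D0: "coeff D 0 \<noteq> 0"
  proof (cases "j = 0")
    case True
    then have "n \<ge> 1" using m1 by (simp add: n_def)
    moreover have "coeff q 0 = 0" using \<open>n \<ge> 1\<close> by (simp add: q_def N_def coeff_monom_mult)
    ultimately show ?thesis using alpha0 True by (simp add: D_def s_def p_def coeff_mult_0)
  next
    case False
    have "D = \<alpha> * \<nu> - \<alpha> * (\<gamma> * \<mu>) - (N * r) * \<mu>"
      using False by (simp add: D_def p_def s_def q_def algebra_simps)
    also have "\<dots> = \<alpha> * \<nu> - \<beta> * \<mu>" by (simp add: Nr algebra_simps)
    finally have "coeff D 0 = coeff \<alpha> 0 * coeff \<nu> 0 - coeff \<beta> 0 * coeff \<mu> 0"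
      by (simp add: coeff_mult_0)
    moreover have "b = monom 1 (2*(m-j)) * (\<mu> + monom 1 1 * \<nu>)"
      using bb' hb' by (simp add: N_def n_def)
    ultimately show ?thesis using inj_det[OF _ jm inj ha _ ev1(1) ev1(3)] False by simp
  qed
  obtain Di where Di: "evp Di" "?M dvd D * Di - 1" using inverse_exists[OF evD D0] by blast
  have DiD: "[Di * D = 1] (mod ?M)" using Di by (simp add: cong_iff_dvd_diff mult.commute)
  have DiDJ: "[Di * D = 1] (mod ?J)" using jm by (intro cong_weaken[OF _ DiD]) simp
  define pA where "pA = Di * s"
  define qA where "qA = - (Di * q)"
  define rA where "rA = - (Di * r)"
  define sA where "sA = Di * p"
  have evA: "evp pA" "evp qA" "evp rA" "evp sA" using Di evpqs evr
    by (simp_all add: pA_def qA_def rA_def sA_def evp_mult evp_minus)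
  have qd: "?M dvd ?J * q" by (simp add: q_def MJN mult.assoc)
  have "?J * qA = ?M * (- (Di * \<mu>))" unfolding MJN by (simp add: qA_def q_def algebra_simps)
  then have qdA: "?M dvd ?J * qA" by simp
  have e1: "pA*p + rA*q = Di * D" "qA*p + sA*q = 0" "pA*r + rA*s = 0" "qA*r + sA*s = Di * D"
    "p*pA + r*qA = Di * D" "q*pA + s*qA = 0" "p*rA + r*sA = 0" "q*rA + s*sA = Di * D"
    by (simp_all add: pA_def qA_def rA_def sA_def D_def algebra_simps)
  have phi: "phiM m j pA qA rA sA \<in> AutV m j"
    by (rule phiM_AutV[OF jm evA evpqs(1) evpqs(2) evr evpqs(3) qdA qd])
      (simp_all only: e1 DiD DiDJ cong_refl)
  define \<Theta> where "\<Theta> = 1 + eps * \<gamma>"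
  define t where "t = (eps ^ (2*n+1) :: 'k poly)"
  have t: "t = monom 1 1 * N" unfolding t_def eps_pow N_def mult_monom by simp
  have ea: "a = \<Theta> * p + t * r"
  proof -
    have "\<Theta> * p + t * r = \<alpha> + monom 1 1 * (\<gamma> * \<alpha> + N * r)"
      by (simp add: \<Theta>_def p_def t eps_def algebra_simps)
    then show ?thesis by (simp add: Nr ha)
  qed
  have eb: "[b = \<Theta> * q + t * s] (mod ?M)"
  proof (cases "j = 0")
    case False
    have "\<Theta> * q + t * s = N * (\<mu> + monom 1 1 * \<nu>)"
      using False by (simp add: \<Theta>_def q_def t s_def eps_def algebra_simps)
    then show ?thesis by (simp add: bb' hb')
  next
    case True
    then have NM': "N = ?M" by (simp add: N_def n_def)
    have "b - (\<Theta> * q + t * s) = ?M * (monom 1 1 * (\<nu> - \<gamma> * \<mu> - 1))"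
      using True by (simp add: bb' hb' NM' \<Theta>_def q_def t s_def eps_def algebra_simps)
    then show ?thesis by (simp add: cong_iff_dvd_diff)
  qed
  have k1: "[a * pA + b * rA = \<Theta>] (mod ?M)"
  proof -
    have "[a * pA + b * rA = (\<Theta> * p + t * r) * pA + (\<Theta> * q + t * s) * rA] (mod ?M)"
      by (intro cong_add cong_scalar_right eb) (simp add: ea)
    also have "(\<Theta> * p + t * r) * pA + (\<Theta> * q + t * s) * rA = \<Theta> * (Di * D)"
      by (simp add: pA_def rA_def D_def algebra_simps)
    also have "[\<Theta> * (Di * D) = \<Theta> * 1] (mod ?M)" by (intro cong_scalar_left DiD)
    finally show ?thesis by simp
  qed
  have k2: "[a * qA + b * sA = t] (mod ?M)"
  proof -
    have "[a * qA + b * sA = (\<Theta> * p + t * r) * qA + (\<Theta> * q + t * s) * sA] (mod ?M)"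
      by (intro cong_add cong_scalar_right eb) (simp add: ea)
    also have "(\<Theta> * p + t * r) * qA + (\<Theta> * q + t * s) * sA = t * (Di * D)"
      by (simp add: qA_def sA_def D_def algebra_simps)
    also have "[t * (Di * D) = t * 1] (mod ?M)" by (intro cong_scalar_left DiD)
    finally show ?thesis by simp
  qed
  have "equivalent m j (a, b) (vartheta m j \<gamma>)"
    unfolding equivalent_def
  proof (rule bexI[OF _ phi], intro ballI)
    fix z :: "'k poly \<times> 'k poly" assume z: "z \<in> Lset (2*m) \<times> Lset (2*j)"
    have "thetaL m (a, b) (tensor_id m j (phiM m j pA qA rA sA) z)
        = trunc (2*m) (fst z * (a*pA + b*rA) + snd z * (a*qA + b*sA))"
      using z by (intro thetaL_phiM[OF jm qdA bd]) auto
    also have "\<dots> = thetaL m (vartheta m j \<gamma>) z"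
    proof -
      have "[fst z * (a*pA + b*rA) + snd z * (a*qA + b*sA) = fst z * \<Theta> + snd z * t] (mod ?M)"
        by (intro cong_add cong_scalar_left k1 k2)
      also have "[fst z * \<Theta> + snd z * t = trunc (2*m) \<Theta> * fst z + trunc (2*m) t * snd z] (mod ?M)"
        using cong_add[OF cong_scalar_right[OF trunc_cong[of "2*m" \<Theta>], of "fst z"]
            cong_scalar_right[OF trunc_cong[of "2*m" t], of "snd z"]]
        by (simp add: cong_sym_eq mult.commute)
      finally show ?thesis
        by (simp add: thetaL_def vartheta_def \<Theta>_def t_def n_def trunc_eq_iff)
    qed
    finally show "thetaL m (vartheta m j \<gamma>) z = thetaL m (a, b) (tensor_id m j (phiM m j pA qA rA sA) z)" ..
  qed
  then show ?thesis using gG by blast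
qed

theorem proposition3p6:
  fixes m j :: nat and a b :: "'k::field poly"
  assumes "j \<le> m"
    and "a \<in> Lset (2*m)" and "b \<in> Lset (2*m)"
    and "trunc (2*m) (eps ^ (2*j) * b) = 0"
    and "inj_on (thetaK m (a, b)) (Vset m j)"
    and "thetaL m (a, b) ` (Lset (2*m) \<times> Lset (2*j)) = Lset (2*m)"
  shows "(\<exists>\<gamma>\<in>Gam m j. equivalent m j (a, b) (vartheta m j \<gamma>))
    \<and> (\<forall>\<gamma>::'k poly\<in>Gam m j. \<forall>\<gamma>'\<in>Gam m j.
         equivalent m j (vartheta m j \<gamma>) (vartheta m j \<gamma>') \<longleftrightarrow> \<gamma> = \<gamma>')"
proof
  show "\<exists>\<gamma>\<in>Gam m j. equivalent m j (a, b) (vartheta m j \<gamma>)"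
  proof (cases "m = 0")
    case True
    have "0 \<in> Gam m j" by (simp add: Gam_def Kset_iff Lset_def)
    moreover have "equivalent m j (a, b) (vartheta m j 0)"
      unfolding equivalent_def using True by (intro bexI[OF _ id_AutV]) (simp add: thetaL_def)
    ultimately show ?thesis by blast
  next
    case False
    then show ?thesis using existence[OF assms(1) _ assms(2-6)] by simp
  qed
  show "\<forall>\<gamma>::'k poly\<in>Gam m j. \<forall>\<gamma>'\<in>Gam m j.
         equivalent m j (vartheta m j \<gamma>) (vartheta m j \<gamma>') \<longleftrightarrow> \<gamma> = \<gamma>'"
    using uniq[OF assms(1)] equiv_refl by blast
qed

end
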